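(* Let $G$ be an abelian group and $\mathbf{z}_0,\dots,\mathbf{z}_t\in G$, with $\mathbf{z}_0$ of finite order $s$. Suppose there are integers $r_0,\dots,r_t$ with $r_n\mathbf{z}_{n+1}=r_{n+1}\mathbf{z}_n$ and $\gcd(r_n,r_{n+1})=1$ for $0\le n\le t-1$. Then for each $1\le n\le t$, the order of $\mathbf{z}_n$ divides $\operatorname{lcm}\{s r_0, r_1,\dots,r_{n-1}\}$. *)

theory Defs
  imports "HOL-Algebra.Algebra"
begin

end

theory Submission
  imports Defs
begin

theorem lemma3p3:
  fixes G :: "('a, 'b) monoid_scheme" and z :: "nat \<Rightarrow> 'a" and r :: "nat \<Rightarrow> int"
    and t s :: nat
  assumes "comm_group G"
    and "\<And>n. n \<le> t \<Longrightarrow> z n \<in> carrier G"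
    and "group.ord G (z 0) = s" and "s \<noteq> 0"
    and "\<And>n. n < t \<Longrightarrow> z (Suc n) [^]\<^bsub>G\<^esub> (r n) = z n [^]\<^bsub>G\<^esub> (r (Suc n))"
    and "\<And>n. n < t \<Longrightarrow> gcd (r n) (r (Suc n)) = 1"
  shows "\<And>n. 1 \<le> n \<Longrightarrow> n \<le> t \<Longrightarrow>
           int (group.ord G (z n)) dvd Lcm (insert (int s * r 0) (r ` {1..<n}))"
proof -
  interpret comm_group G by fact
  define oz where "oz k = int (ord (z k))" for k
  define L where "L n = Lcm (insert (int s * r 0) (r ` {1..<n}))" for n
  have car: "k \<le> t \<Longrightarrow> z k \<in> carrier G" for k using assms(2) by blast
  have E: "k \<le> t \<Longrightarrow> (z k [^]\<^bsub>G\<^esub> (i::int) = \<one>\<^bsub>G\<^esub>) = (oz k dvd i)" for k i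
    unfolding oz_def using int_pow_eq_id car by blast
  have D: "oz (Suc n) dvd r n * oz n" if "n < t" for n
  proof -
    have "z (Suc n) [^]\<^bsub>G\<^esub> (r n * oz n) = (z (Suc n) [^]\<^bsub>G\<^esub> r n) [^]\<^bsub>G\<^esub> oz n"
      using int_pow_pow car that by simp
    also have "\<dots> = (z n [^]\<^bsub>G\<^esub> r (Suc n)) [^]\<^bsub>G\<^esub> oz n" using assms(5) that by simp
    also have "\<dots> = z n [^]\<^bsub>G\<^esub> (oz n * r (Suc n))"
      using int_pow_pow car that by (simp add: mult.commute)
    also have "\<dots> = \<one>\<^bsub>G\<^esub>" using E[of n] that by simp
    finally show ?thesis using E[of "Suc n"] that by simp
  qed
  have LS: "L (Suc n) = lcm (L n) (r n)" if "1 \<le> n" for n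
  proof -
    have "{1..<Suc n} = insert n {1..<n}" using that by auto
    then show ?thesis unfolding L_def by (simp add: insert_commute lcm.commute)
  qed
  have I: "n < t \<Longrightarrow> r n * oz n dvd L (Suc n)" for n
  proof (induction n)
    case 0
    then show ?case unfolding L_def oz_def using assms(3) by (simp add: mult.commute)
  next
    case (Suc n)
    then have IH: "r n * oz n dvd L (Suc n)" by simp
    have M: "L (Suc (Suc n)) = lcm (L (Suc n)) (r (Suc n))" using LS by simp
    show ?case
    proof (cases "r (Suc n) = 0")
      case True
      then show ?thesis using M by simp
    next
      case False
      obtain m where m: "L (Suc (Suc n)) = r (Suc n) * m" using M by (metis dvd_lcm2 dvdE)
      obtain a b where ab: "a * r n + b * r (Suc n) = 1"
        using assms(6)[of n] Suc.prems bezout_int[of "r n" "r (Suc n)"] by auto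
      have on: "oz n dvd L (Suc (Suc n))" using IH M
        by (metis dvd_lcm1 dvd_mult_right dvd_trans)
      have osn: "oz (Suc n) dvd L (Suc (Suc n))" using IH M D[of n] Suc.prems
        by (metis dvd_lcm1 dvd_trans Suc_lessD)
      have mm: "m = (a * m) * r n + b * L (Suc (Suc n))"
      proof -
        have "(a * m) * r n + b * L (Suc (Suc n)) = m * (a * r n + b * r (Suc n))"
          using m by (simp add: algebra_simps)
        then show ?thesis using ab by simp
      qed
      have ct: "z (Suc n) \<in> carrier G" "z n \<in> carrier G" using car Suc.prems by auto
      have "z (Suc n) [^]\<^bsub>G\<^esub> m = z (Suc n) [^]\<^bsub>G\<^esub> ((a * m) * r n) \<otimes>\<^bsub>G\<^esub> z (Suc n) [^]\<^bsub>G\<^esub> (b * L (Suc (Suc n)))"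
      proof -
        have "z (Suc n) [^]\<^bsub>G\<^esub> ((a * m) * r n + b * L (Suc (Suc n))) = z (Suc n) [^]\<^bsub>G\<^esub> ((a * m) * r n) \<otimes>\<^bsub>G\<^esub> z (Suc n) [^]\<^bsub>G\<^esub> (b * L (Suc (Suc n)))"
          by (rule int_pow_mult[OF ct(1)])
        then show ?thesis by (simp only: mm[symmetric])
      qed
      also have "z (Suc n) [^]\<^bsub>G\<^esub> ((a * m) * r n) = (z (Suc n) [^]\<^bsub>G\<^esub> r n) [^]\<^bsub>G\<^esub> (a * m)"
        using int_pow_pow ct by (simp add: mult.commute)
      also have "\<dots> = (z n [^]\<^bsub>G\<^esub> r (Suc n)) [^]\<^bsub>G\<^esub> (a * m)" using assms(5) Suc.prems by simp
      also have "\<dots> = z n [^]\<^bsub>G\<^esub> (a * L (Suc (Suc n)))"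
        using int_pow_pow ct m by (simp add: ac_simps)
      also have "\<dots> = \<one>\<^bsub>G\<^esub>" using E[of n] on Suc.prems by simp
      also have "z (Suc n) [^]\<^bsub>G\<^esub> (b * L (Suc (Suc n))) = \<one>\<^bsub>G\<^esub>"
        using E[of "Suc n"] osn Suc.prems by simp
      finally have "z (Suc n) [^]\<^bsub>G\<^esub> m = \<one>\<^bsub>G\<^esub>" using ct by simp
      then have "oz (Suc n) dvd m" using E[of "Suc n"] Suc.prems by simp
      then show ?thesis using m by simp
    qed
  qed
  fix n :: nat assume n: "1 \<le> n" "n \<le> t"
  then obtain k where k: "n = Suc k" "k < t" by (cases n) auto
  have "oz (Suc k) dvd L (Suc k)" using D[of k] I[of k] k by (metis dvd_trans)
  then show "int (ord (z n)) dvd Lcm (insert (int s * r 0) (r ` {1..<n}))"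
    unfolding oz_def L_def using k by simp
qed

end
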